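(* Let $A,B\in\mathbb{N}$ with $A\ge B$ and let $p\in[0,1]$. For $i\in\{1,\dots,B\}$ let $X_i\sim\mathrm{Bin}(A-i,p)$. Then $i\mapsto \mathbb{P}(X_i\ge B-i)$ is a (non-strictly) increasing function on $\{1,\dots,B\}$.
   Context: $\mathrm{Bin}(n,p)$ denotes the binomial distribution with $n$ trials and success probability $p$. *)

theory Defs
  imports "HOL-Probability.Probability"
begin

end

theory Submission
  imports Defs
begin

lemma binom_step:
  fixes p :: real
  assumes "0 \<le> p" "p \<le> 1"
  shows "measure_pmf.prob (binomial_pmf (Suc n) p) {Suc k..}
         \<le> measure_pmf.prob (binomial_pmf n p) {k..}"
proof -
  let ?E = "emeasure (measure_pmf (binomial_pmf n p)) {k..}"
  have eq: "binomial_pmf (Suc n) p =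
     bernoulli_pmf p \<bind> (\<lambda>b. map_pmf (\<lambda>m. (if b then 1 else 0) + m) (binomial_pmf n p))"
    using assms by (simp add: binomial_pmf_Suc map_pmf_def)
  have le: "emeasure (measure_pmf (map_pmf (\<lambda>m. (if b then 1 else 0) + m) (binomial_pmf n p))) {Suc k..} \<le> ?E" for b
  proof -
    have "emeasure (measure_pmf (map_pmf (\<lambda>m. (if b then 1 else 0) + m) (binomial_pmf n p))) {Suc k..}
        = emeasure (measure_pmf (binomial_pmf n p)) ((\<lambda>m. (if b then 1 else 0) + m) -` {Suc k..})"
      by (simp add: emeasure_map_pmf)
    also have "\<dots> \<le> ?E"
      by (rule emeasure_mono) auto
    finally show ?thesis .
  qed
  have "emeasure (measure_pmf (binomial_pmf (Suc n) p)) {Suc k..}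
     = (\<integral>\<^sup>+b. emeasure (measure_pmf (map_pmf (\<lambda>m. (if b then 1 else 0) + m) (binomial_pmf n p))) {Suc k..} \<partial>bernoulli_pmf p)"
    by (subst eq) simp
  also have "\<dots> \<le> (\<integral>\<^sup>+b. ?E \<partial>bernoulli_pmf p)"
    by (rule nn_integral_mono) (rule le)
  also have "\<dots> = ?E" by (simp add: measure_pmf.emeasure_space_1)
  finally show ?thesis
    by (simp add: measure_pmf.emeasure_eq_measure)
qed

theorem lemma7:
  fixes A B :: nat and p :: real
  assumes "B \<le> A" and "0 \<le> p" and "p \<le> 1"
  shows "mono_on {1..B}
           (\<lambda>i. measure_pmf.prob (binomial_pmf (A - i) p) {B - i..})"
proof -
  have step: "measure_pmf.prob (binomial_pmf (A - i) p) {B - i..}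
      \<le> measure_pmf.prob (binomial_pmf (A - Suc i) p) {B - Suc i..}" if "Suc i \<le> B" for i
  proof -
    have "A - i = Suc (A - Suc i)" "B - i = Suc (B - Suc i)" using that assms(1) by auto
    then show ?thesis using binom_step[OF assms(2,3)] by simp
  qed
  show ?thesis
  proof (rule mono_onI)
    fix r s assume r: "r \<in> {1..B}" and s: "s \<in> {1..B}" and rs: "r \<le> s"
    have "s \<le> B \<Longrightarrow> measure_pmf.prob (binomial_pmf (A - r) p) {B - r..}
      \<le> measure_pmf.prob (binomial_pmf (A - s) p) {B - s..}"
      using rs
    proof (induction s)
      case 0 then show ?case by simp
    next
      case (Suc m)
      show ?case
      proof (cases "r = Suc m")
        case True then show ?thesis by simp
      next
        case False
        then have "r \<le> m" using Suc.prems by simp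
        then show ?thesis using Suc step[of m] by simp
      qed
    qed
    then show "measure_pmf.prob (binomial_pmf (A - r) p) {B - r..}
      \<le> measure_pmf.prob (binomial_pmf (A - s) p) {B - s..}" using s by simp
  qed
qed

end
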